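(* Let $E\in\mathcal O((0,1])$ be non-empty. Then $E$ is locally ergodic with respect to $\mathcal G^{\mathrm{dyad}}_E$.
   Context: Dyadic intervals $I_k^d=((k-1)2^{-d},k2^{-d}]$, $d\ge0$, $1\le k\le2^d$. $\mathcal O((0,1])$ is the system of all unions of dyadic intervals (including $\emptyset$). $\mathcal G^{\mathrm{dyad}}$ is the group of maps $g_\pi:(0,1]\to(0,1]$, $g_\pi(t)=\pi(k)2^{-d}-(k2^{-d}-t)$ for $t\in I^d_k$, where $d\ge0$ and $\pi$ is a permutation of $\{1,\dots,2^d\}$; for $E\subseteq(0,1]$, $\mathcal G^{\mathrm{dyad}}_E=\{g\in\mathcal G^{\mathrm{dyad}}:g|_{E^c}=\mathrm{id}\}$. Let $\mathcal F^{\mathrm{dyad}}_N=\sigma(I^N_l:l=1,\dots,2^N)$ and $\lambda$ the Lebesgue measure. For a group $\mathbb G$ of such maps, a Borel set $E$ with $\lambda(E)>0$ is finite locally ergodic w.r.t. $\mathbb G$ if there is $N_E$ with $E\in\mathcal F^{\mathrm{dyad}}_{N_E}$ such that for all $N\ge N_E$ and $l\ne m$ with $A=I^N_l\cup I^N_m\subseteq E$ there is a subgroup $\mathbb H\subseteq\mathbb G$ whose elements are the identity on $A^c$ and such that every Borel $B\subseteq A$ with $h^{-1}(B)=B$ for all $h\in\mathbb H$ satisfies $\lambda(B)\in\{0,\lambda(A)\}$. $E$ is locally ergodic w.r.t. $\mathbb G$ if it is the union of an increasing sequence of finite locally ergodic subsets. *)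

theory Defs
  imports "HOL-Analysis.Analysis" "HOL-Combinatorics.Permutations"
begin

definition dyad_int :: "nat \<Rightarrow> nat \<Rightarrow> real set" where
  "dyad_int d k = {t. (real k - 1) / 2 ^ d < t \<and> t \<le> real k / 2 ^ d}"

definition dyad_open_sets :: "real set set" where
  "dyad_open_sets = {\<Union>S | S. S \<subseteq> {dyad_int d k | d k. 1 \<le> k \<and> k \<le> 2 ^ d}}"

text \<open>The map g_pi on (0,1]; we extend it by the identity outside (0,1].\<close>
definition dyad_map :: "nat \<Rightarrow> (nat \<Rightarrow> nat) \<Rightarrow> real \<Rightarrow> real" where
  "dyad_map d \<pi> t =
     (if t \<in> {0<..1} then
        (let k = (THE k. 1 \<le> k \<and> k \<le> 2 ^ d \<and> t \<in> dyad_int d k)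
         in real (\<pi> k) / 2 ^ d - (real k / 2 ^ d - t))
      else t)"

definition G_dyad :: "(real \<Rightarrow> real) set" where
  "G_dyad = {dyad_map d \<pi> | d \<pi>. \<pi> permutes {1..2 ^ d}}"

definition G_dyad_on :: "real set \<Rightarrow> (real \<Rightarrow> real) set" where
  "G_dyad_on E = {g \<in> G_dyad. \<forall>t \<in> {0<..1} - E. g t = t}"

definition F_dyad :: "nat \<Rightarrow> real set set" where
  "F_dyad N = sigma_sets {0<..1} {dyad_int N l | l. 1 \<le> l \<and> l \<le> 2 ^ N}"

definition is_subgroup_of :: "(real \<Rightarrow> real) set \<Rightarrow> (real \<Rightarrow> real) set \<Rightarrow> bool" where
  "is_subgroup_of H G \<longleftrightarrow> H \<subseteq> G \<and> id \<in> H \<and>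
     (\<forall>h1\<in>H. \<forall>h2\<in>H. h1 \<circ> h2 \<in> H) \<and> (\<forall>h\<in>H. inv h \<in> H)"

definition finite_locally_ergodic :: "(real \<Rightarrow> real) set \<Rightarrow> real set \<Rightarrow> bool" where
  "finite_locally_ergodic G E \<longleftrightarrow>
     E \<in> sets borel \<and> measure lborel E > 0 \<and>
     (\<exists>NE. E \<in> F_dyad NE \<and>
        (\<forall>N \<ge> NE. \<forall>l m. 1 \<le> l \<and> l \<le> 2 ^ N \<and> 1 \<le> m \<and> m \<le> 2 ^ N \<and> l \<noteq> m \<and>
            dyad_int N l \<union> dyad_int N m \<subseteq> E \<longrightarrow>
            (let A = dyad_int N l \<union> dyad_int N m in
             \<exists>H. is_subgroup_of H G \<and> (\<forall>h\<in>H. \<forall>t\<in>{0<..1} - A. h t = t) \<and>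
                 (\<forall>B \<in> sets borel. B \<subseteq> A \<longrightarrow>
                    (\<forall>h\<in>H. {t \<in> {0<..1}. h t \<in> B} = B) \<longrightarrow>
                    measure lborel B = 0 \<or> measure lborel B = measure lborel A))))"

definition locally_ergodic :: "(real \<Rightarrow> real) set \<Rightarrow> real set \<Rightarrow> bool" where
  "locally_ergodic G E \<longleftrightarrow>
     (\<exists>En :: nat \<Rightarrow> real set. incseq En \<and> (\<forall>n. finite_locally_ergodic G (En n)) \<and>
        E = (\<Union>n. En n))"

end

theory Submission
  imports Defs
begin

definition idx :: "nat \<Rightarrow> real \<Rightarrow> nat" where
  "idx d t = nat \<lceil>t * 2 ^ d\<rceil>"

lemma dyad_int_iff: "t \<in> dyad_int d k \<longleftrightarrow> real k - 1 < t * 2 ^ d \<and> t * 2 ^ d \<le> real k"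
  by (simp add: dyad_int_def field_simps)

lemma dyad_int_ceil: "1 \<le> k \<Longrightarrow> t \<in> dyad_int d k \<longleftrightarrow> \<lceil>t * 2 ^ d\<rceil> = int k"
  unfolding dyad_int_iff ceiling_eq_iff by simp

lemma idx_props:
  assumes "t \<in> {0<..1}"
  shows "1 \<le> idx d t" "idx d t \<le> 2 ^ d" "t \<in> dyad_int d (idx d t)"
proof -
  have p: "0 < t * 2 ^ d" "t * 2 ^ d \<le> 2 ^ d" using assms by auto
  have c1: "1 \<le> \<lceil>t * 2 ^ d\<rceil>" using p by (simp add: ceiling_le_iff zero_less_ceiling)
  have c2: "\<lceil>t * 2 ^ d\<rceil> \<le> 2 ^ d"
    using p(2) by (metis ceiling_mono ceiling_of_int of_int_numeral of_int_power)
  have "nat 1 \<le> nat \<lceil>t * 2 ^ d\<rceil>" using c1 by (rule nat_mono)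
  then show i1: "1 \<le> idx d t" unfolding idx_def by (metis nat_one_as_int)
  show "idx d t \<le> 2 ^ d" using c2 c1 unfolding idx_def by (simp add: nat_le_iff)
  show "t \<in> dyad_int d (idx d t)"
    using c1 by (subst dyad_int_ceil[OF i1]) (auto simp: idx_def)
qed

lemma idx_unique:
  assumes "1 \<le> k" "t \<in> dyad_int d k" shows "k = idx d t"
  using assms dyad_int_ceil[of k t d] by (simp add: idx_def)

lemma THE_idx:
  assumes "t \<in> {0<..1}"
  shows "(THE k. 1 \<le> k \<and> k \<le> 2 ^ d \<and> t \<in> dyad_int d k) = idx d t"
  apply (rule the_equality)
  using idx_props[OF assms] idx_unique by auto

lemma dyad_map_eq:
  assumes "t \<in> {0<..1}"
  shows "dyad_map d \<pi> t = t + (real (\<pi> (idx d t)) - real (idx d t)) / 2 ^ d"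
  unfolding dyad_map_def if_P[OF assms] THE_idx[OF assms] Let_def by (simp add: field_simps)

lemma dyad_map_out: "t \<notin> {0<..1} \<Longrightarrow> dyad_map d \<pi> t = t"
  unfolding dyad_map_def by (simp only: if_False)

lemma idx_shift:
  fixes m :: int
  shows "\<lceil>(t + m / 2 ^ d) * 2 ^ d\<rceil> = \<lceil>t * 2 ^ d\<rceil> + m"
proof -
  have "(t + m / 2 ^ d) * 2 ^ d = t * 2 ^ d + of_int m" by (simp add: field_simps)
  then show ?thesis by simp
qed

lemma dyad_map_perm:
  assumes "\<pi> permutes {1..2^d}" "t \<in> {0<..1}"
  shows "dyad_map d \<pi> t \<in> {0<..1}" "idx d (dyad_map d \<pi> t) = \<pi> (idx d t)"
proof -
  let ?k = "idx d t"
  have k: "?k \<in> {1..2^d}" using idx_props[OF assms(2)] by auto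
  have j: "\<pi> ?k \<in> {1..2^d}" using permutes_in_image[OF assms(1)] k by auto
  have tk: "t \<in> dyad_int d ?k" using idx_props[OF assms(2)] by auto
  define s where "s = dyad_map d \<pi> t"
  have s: "s * 2 ^ d = t * 2 ^ d + real (\<pi> ?k) - real ?k"
    unfolding s_def dyad_map_eq[OF assms(2)] by (simp add: field_simps)
  have "s \<in> dyad_int d (\<pi> ?k)"
    using tk s unfolding dyad_int_iff by auto
  then have sj: "real (\<pi> ?k) - 1 < s * 2 ^ d" "s * 2 ^ d \<le> real (\<pi> ?k)"
    unfolding dyad_int_iff by auto
  have "0 < s * 2 ^ d" using sj(1) j by auto
  then have s0: "0 < s" by (simp add: zero_less_mult_iff)
  have "real (\<pi> ?k) \<le> real (2 ^ d)" using j by (simp only: atLeastAtMost_iff of_nat_le_iff)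
  then have h: "real (\<pi> ?k) \<le> 2 ^ d" by (simp only: of_nat_power of_nat_numeral)
  have "s * 2 ^ d \<le> 1 * 2 ^ d" using order_trans[OF sj(2) h] by simp
  then have "s \<le> 1" by (rule mult_right_le_imp_le) simp
  with s0 show "dyad_map d \<pi> t \<in> {0<..1}" by (simp add: s_def)
  show "idx d (dyad_map d \<pi> t) = \<pi> (idx d t)"
    using idx_unique[of "\<pi> ?k" s d] j \<open>s \<in> dyad_int d (\<pi> ?k)\<close> by (simp add: s_def)
qed

lemma dyad_map_comp:
  assumes "\<sigma> permutes {1..2^d}"
  shows "dyad_map d \<pi> \<circ> dyad_map d \<sigma> = dyad_map d (\<pi> \<circ> \<sigma>)"
proof
  fix t
  show "(dyad_map d \<pi> \<circ> dyad_map d \<sigma>) t = dyad_map d (\<pi> \<circ> \<sigma>) t"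
  proof (cases "t \<in> {0<..1}")
    case True
    note s = dyad_map_perm[OF assms True]
    have a: "dyad_map d \<pi> (dyad_map d \<sigma> t) = dyad_map d \<sigma> t + (real (\<pi> (\<sigma> (idx d t))) - real (\<sigma> (idx d t))) / 2 ^ d"
      using dyad_map_eq[OF s(1)] s(2) by simp
    have b: "dyad_map d \<sigma> t = t + (real (\<sigma> (idx d t)) - real (idx d t)) / 2 ^ d"
      by (rule dyad_map_eq[OF True])
    have c: "dyad_map d (\<pi> \<circ> \<sigma>) t = t + (real (\<pi> (\<sigma> (idx d t))) - real (idx d t)) / 2 ^ d"
      using dyad_map_eq[OF True] by simp
    show ?thesis by (simp only: o_apply a c) (simp add: b field_simps)
  next
    case False
    then show ?thesis by (simp add: dyad_map_out)
  qed
qed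

lemma dyad_map_id: "dyad_map d id = id"
proof
  fix t show "dyad_map d id t = id t"
    by (cases "t \<in> {0<..1}") (simp_all add: dyad_map_eq dyad_map_out)
qed

lemma dyad_map_inv:
  assumes "\<pi> permutes {1..2^d}"
  shows "inv (dyad_map d \<pi>) = dyad_map d (inv \<pi>)"
    "dyad_map d \<pi> \<circ> dyad_map d (inv \<pi>) = id" "dyad_map d (inv \<pi>) \<circ> dyad_map d \<pi> = id"
proof -
  have pi: "inv \<pi> permutes {1..2^d}" using permutes_inv[OF assms] .
  show 1: "dyad_map d \<pi> \<circ> dyad_map d (inv \<pi>) = id"
    using dyad_map_comp[OF pi, of \<pi>] permutes_inv_o(1)[OF assms] dyad_map_id by simp
  show 2: "dyad_map d (inv \<pi>) \<circ> dyad_map d \<pi> = id"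
    using dyad_map_comp[OF assms, of "inv \<pi>"] permutes_inv_o(2)[OF assms] dyad_map_id by simp
  show "inv (dyad_map d \<pi>) = dyad_map d (inv \<pi>)"
    using inv_unique_comp[OF 1 2] .
qed

lemma dyad_map_inj:
  assumes "\<pi> permutes {1..2^d}"
  shows "inj (dyad_map d \<pi>)"
  by (metis dyad_map_inv(3)[OF assms] inj_on_id inj_on_imageI2)

definition pw :: "nat \<Rightarrow> (real \<Rightarrow> real) \<Rightarrow> bool" where
  "pw D g \<longleftrightarrow> (\<exists>m::nat \<Rightarrow> int. \<forall>t\<in>{0<..1}. g t = t + of_int (m (idx D t)) / 2 ^ D)"

lemma idx_right_end:
  assumes "1 \<le> k" "k \<le> 2 ^ D"
  shows "real k / 2 ^ D \<in> {0<..1}" "idx D (real k / 2 ^ D) = k"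
proof -
  have "real k \<le> real (2 ^ D)" using assms by (simp only: of_nat_le_iff)
  then have "real k \<le> 2 ^ D" by simp
  then show "real k / 2 ^ D \<in> {0<..1}" using assms by auto
  show "idx D (real k / 2 ^ D) = k" unfolding idx_def by simp
qed

lemma recog:
  assumes "pw D g" and into: "\<forall>t\<in>{0<..1}. g t \<in> {0<..1}" and inj: "inj_on g {0<..1}"
    and out: "\<forall>t. t \<notin> {0<..1} \<longrightarrow> g t = t"
  shows "g \<in> G_dyad"
proof -
  obtain m where m: "\<forall>t\<in>{0<..1}. g t = t + of_int (m (idx D t)) / 2 ^ D"
    using assms(1) unfolding pw_def by blast
  define S where "S = {1..(2::nat)^D}"
  define \<pi> where "\<pi> k = (if k \<in> S then nat (int k + m k) else k)" for k
  have key: "\<pi> k \<in> S \<and> real (\<pi> k) = real k + of_int (m k) \<and> g (real k / 2 ^ D) = real (\<pi> k) / 2 ^ D"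
    if k: "k \<in> S" for k
  proof -
    have k1: "1 \<le> k" "k \<le> 2 ^ D" using k by (auto simp: S_def)
    note e = idx_right_end[OF k1]
    have "g (real k / 2 ^ D) = real k / 2 ^ D + of_int (m (idx D (real k / 2 ^ D))) / 2 ^ D"
      using m e(1) by blast
    then have gk: "g (real k / 2 ^ D) = (real k + of_int (m k)) / 2 ^ D"
      unfolding e(2) by (simp add: add_divide_distrib)
    have "g (real k / 2 ^ D) \<in> {0<..1}" using into e by blast
    then have r: "0 < real k + of_int (m k)" "real k + of_int (m k) \<le> 2 ^ D"
      unfolding gk by (auto simp: divide_le_eq zero_less_divide_iff)
    have i1: "0 < int k + m k" using r(1) by linarith
    have "real_of_int (int k + m k) \<le> real_of_int (2 ^ D)" using r(2) by simp
    then have i2: "int k + m k \<le> 2 ^ D" by (simp only: of_int_le_iff)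
    note i = i1 i2
    then have "real (\<pi> k) = real k + of_int (m k)" using k by (simp add: \<pi>_def)
    moreover have "\<pi> k \<in> S" using i k unfolding \<pi>_def S_def by auto
    ultimately show ?thesis using gk by simp
  qed
  have eq: "g = dyad_map D \<pi>"
  proof
    fix t show "g t = dyad_map D \<pi> t"
    proof (cases "t \<in> {0<..1}")
      case True
      have kS: "idx D t \<in> S" using idx_props[OF True] by (simp add: S_def)
      show ?thesis using m True key[OF kS] by (simp add: dyad_map_eq)
    next
      case False then show ?thesis using out by (simp add: dyad_map_out)
    qed
  qed
  have injp: "inj_on \<pi> S"
  proof (rule inj_onI)
    fix a b assume ab: "a \<in> S" "b \<in> S" "\<pi> a = \<pi> b"
    have "g (real a / 2 ^ D) = g (real b / 2 ^ D)" using key[OF ab(1)] key[OF ab(2)] ab(3) by simp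
    moreover have "real a / 2 ^ D \<in> {0<..1}" "real b / 2 ^ D \<in> {0<..1}"
      using ab idx_right_end by (auto simp: S_def)
    ultimately have "real a / 2 ^ D = real b / 2 ^ D" using inj by (meson inj_onD)
    then show "a = b" by simp
  qed
  have img: "\<pi> ` S \<subseteq> S" using key by auto
  have "\<pi> ` S = S" using endo_inj_surj[OF _ img injp] by (simp add: S_def)
  then have "bij_betw \<pi> S S" using injp by (simp add: bij_betw_def)
  then have "\<pi> permutes S" by (rule bij_imp_permutes) (simp add: \<pi>_def)
  then show ?thesis unfolding G_dyad_def eq S_def by blast
qed

lemma ceil_nest:
  fixes y :: real
  shows "\<lceil>y / 2 ^ e\<rceil> = \<lceil>(of_int \<lceil>y\<rceil> :: real) / 2 ^ e\<rceil>"
proof -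
  define n where "n = \<lceil>y / 2 ^ e\<rceil>"
  have n: "of_int n - 1 < y / 2 ^ e" "y / 2 ^ e \<le> of_int n"
    unfolding n_def by (simp_all add: ceiling_correct)
  have "y \<le> of_int n * 2 ^ e" using n(2) by (simp add: divide_le_eq)
  then have "y \<le> of_int (n * 2 ^ e)" by simp
  then have c: "\<lceil>y\<rceil> \<le> n * 2 ^ e" by (simp add: ceiling_le_iff)
  have "of_int \<lceil>y\<rceil> \<le> (of_int (n * 2 ^ e) :: real)" using c by (simp only: of_int_le_iff)
  then have u: "of_int \<lceil>y\<rceil> / 2 ^ e \<le> (of_int n :: real)" by (simp add: divide_le_eq)
  have "y \<le> of_int \<lceil>y\<rceil>" by (rule le_of_int_ceiling)
  then have "y / 2 ^ e \<le> of_int \<lceil>y\<rceil> / 2 ^ e" by (simp add: divide_right_mono)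
  with n(1) u have "real_of_int n - 1 < of_int \<lceil>y\<rceil> / 2 ^ e \<and> of_int \<lceil>y\<rceil> / 2 ^ e \<le> (of_int n :: real)"
    by linarith
  then have "\<lceil>real_of_int \<lceil>y\<rceil> / 2 ^ e\<rceil> = n" by (simp add: ceiling_eq_iff)
  then show ?thesis unfolding n_def by simp
qed

lemma idx_nest:
  assumes "t \<in> {0<..1}" "d \<le> D"
  shows "idx d t = nat \<lceil>real (idx D t) / 2 ^ (D - d)\<rceil>"
proof -
  have pos: "0 < \<lceil>t * 2 ^ D\<rceil>" using assms(1) by simp
  have "t * 2 ^ d = (t * 2 ^ D) / 2 ^ (D - d)"
    using assms(2) by (simp add: power_diff)
  then have "\<lceil>t * 2 ^ d\<rceil> = \<lceil>(of_int \<lceil>t * 2 ^ D\<rceil> :: real) / 2 ^ (D - d)\<rceil>"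
    using ceil_nest by simp
  moreover have "real (idx D t) = of_int \<lceil>t * 2 ^ D\<rceil>" using pos by (simp add: idx_def)
  ultimately show ?thesis by (simp add: idx_def)
qed

lemma pw_raise:
  assumes "\<pi> permutes {1..2^d}" "d \<le> D"
  shows "pw D (dyad_map d \<pi>)"
proof -
  define m where "m K = (int (\<pi> (nat \<lceil>real K / 2 ^ (D - d)\<rceil>)) - int (nat \<lceil>real K / 2 ^ (D - d)\<rceil>)) * 2 ^ (D - d)" for K
  have "\<forall>t\<in>{0<..1}. dyad_map d \<pi> t = t + of_int (m (idx D t)) / 2 ^ D"
  proof
    fix t :: real assume t: "t \<in> {0<..1}"
    have e: "(2::real) ^ D = 2 ^ d * 2 ^ (D - d)" using assms(2) by (simp flip: power_add)
    show "dyad_map d \<pi> t = t + of_int (m (idx D t)) / 2 ^ D"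
      unfolding dyad_map_eq[OF t] m_def idx_nest[OF t assms(2), symmetric] e by simp
  qed
  then show ?thesis unfolding pw_def by blast
qed

lemma pw_comp:
  assumes "pw D g1" "pw D g2" "\<forall>t\<in>{0<..1}. g2 t \<in> {0<..1}"
  shows "pw D (g1 \<circ> g2)"
proof -
  obtain m1 where m1: "\<forall>t\<in>{0<..1}. g1 t = t + of_int (m1 (idx D t)) / 2 ^ D"
    using assms(1) unfolding pw_def by blast
  obtain m2 where m2: "\<forall>t\<in>{0<..1}. g2 t = t + of_int (m2 (idx D t)) / 2 ^ D"
    using assms(2) unfolding pw_def by blast
  define m where "m k = m2 k + m1 (nat (int k + m2 k))" for k
  have "\<forall>t\<in>{0<..1}. (g1 \<circ> g2) t = t + of_int (m (idx D t)) / 2 ^ D"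
  proof
    fix t :: real assume t: "t \<in> {0<..1}"
    have pos: "0 < \<lceil>t * 2 ^ D\<rceil>" using t by simp
    have ik: "int (idx D t) = \<lceil>t * 2 ^ D\<rceil>" using pos by (simp add: idx_def)
    have s: "g2 t \<in> {0<..1}" using assms(3) t by blast
    define K where "K = idx D t"
    have "idx D (g2 t) = idx D (t + of_int (m2 K) / 2 ^ D)" using m2 t by (simp add: K_def)
    also have "\<dots> = nat (\<lceil>t * 2 ^ D\<rceil> + m2 K)" by (simp only: idx_def idx_shift)
    finally have "idx D (g2 t) = nat (\<lceil>t * 2 ^ D\<rceil> + m2 (idx D t))" by (simp add: K_def)
    then have "idx D (g2 t) = nat (int (idx D t) + m2 (idx D t))" using ik by simp
    then show "(g1 \<circ> g2) t = t + of_int (m (idx D t)) / 2 ^ D"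
      using m1 s m2 t by (simp add: m_def field_simps)
  qed
  then show ?thesis unfolding pw_def by blast
qed

lemma G_dyad_E:
  assumes "g \<in> G_dyad"
  obtains d \<pi> where "\<pi> permutes {1..2^d}" "g = dyad_map d \<pi>"
  using assms unfolding G_dyad_def by blast

lemma G_dyad_props:
  assumes "g \<in> G_dyad"
  shows "inj g" "\<forall>t\<in>{0<..1}. g t \<in> {0<..1}" "\<forall>t. t \<notin> {0<..1} \<longrightarrow> g t = t"
    "inv g \<in> G_dyad" "\<And>D. \<exists>d. \<forall>D'\<ge>max d D. pw D' g"
proof -
  obtain d \<pi> where p: "\<pi> permutes {1..2^d}" "g = dyad_map d \<pi>" using G_dyad_E[OF assms] .
  show "inj g" using dyad_map_inj[OF p(1)] p(2) by simp
  show "\<forall>t\<in>{0<..1}. g t \<in> {0<..1}" using dyad_map_perm(1)[OF p(1)] p(2) by simp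
  show "\<forall>t. t \<notin> {0<..1} \<longrightarrow> g t = t" using dyad_map_out p(2) by simp
  show "inv g \<in> G_dyad" using dyad_map_inv(1)[OF p(1)] permutes_inv[OF p(1)] p(2)
    unfolding G_dyad_def by blast
  show "\<And>D. \<exists>d. \<forall>D'\<ge>max d D. pw D' g" using pw_raise[OF p(1)] p(2) by auto
qed

lemma G_dyad_comp:
  assumes "g1 \<in> G_dyad" "g2 \<in> G_dyad"
  shows "g1 \<circ> g2 \<in> G_dyad"
proof -
  obtain d1 \<pi>1 where p1: "\<pi>1 permutes {1..2^d1}" "g1 = dyad_map d1 \<pi>1" using G_dyad_E[OF assms(1)] .
  obtain d2 \<pi>2 where p2: "\<pi>2 permutes {1..2^d2}" "g2 = dyad_map d2 \<pi>2" using G_dyad_E[OF assms(2)] .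
  define D where "D = max d1 d2"
  have "pw D g1" using pw_raise[OF p1(1)] p1(2) by (simp add: D_def)
  moreover have "pw D g2" using pw_raise[OF p2(1)] p2(2) by (simp add: D_def)
  ultimately have pw: "pw D (g1 \<circ> g2)" using pw_comp G_dyad_props(2)[OF assms(2)] by blast
  show ?thesis
  proof (rule recog[OF pw])
    show "\<forall>t\<in>{0<..1}. (g1 \<circ> g2) t \<in> {0<..1}" using G_dyad_props(2)[OF assms(1)] G_dyad_props(2)[OF assms(2)] by simp
    show "inj_on (g1 \<circ> g2) {0<..1}" using G_dyad_props(1)[OF assms(1)] G_dyad_props(1)[OF assms(2)]
      by (meson inj_compose inj_on_subset subset_UNIV)
    show "\<forall>t. t \<notin> {0<..1} \<longrightarrow> (g1 \<circ> g2) t = t" using G_dyad_props(3)[OF assms(1)] G_dyad_props(3)[OF assms(2)] by simp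
  qed
qed

definition HA :: "real set \<Rightarrow> (real \<Rightarrow> real) set" where
  "HA A = {g \<in> G_dyad. \<forall>t\<in>{0<..1} - A. g t = t}"

lemma id_G: "id \<in> G_dyad"
proof -
  have "id = dyad_map 0 id" using dyad_map_id by simp
  moreover have "(id::nat\<Rightarrow>nat) permutes {1..2^0}" by simp
  ultimately show ?thesis unfolding G_dyad_def by blast
qed

lemma HA_subgroup:
  assumes "A \<subseteq> E"
  shows "is_subgroup_of (HA A) (G_dyad_on E)"
  unfolding is_subgroup_of_def
proof (intro conjI ballI)
  show "HA A \<subseteq> G_dyad_on E" using assms unfolding HA_def G_dyad_on_def by auto
  show "id \<in> HA A" using id_G unfolding HA_def by simp
  fix h1 h2 assume "h1 \<in> HA A" "h2 \<in> HA A"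
  then show "h1 \<circ> h2 \<in> HA A" using G_dyad_comp unfolding HA_def by auto
next
  fix h assume h: "h \<in> HA A"
  then have hg: "h \<in> G_dyad" by (simp add: HA_def)
  have "\<forall>t\<in>{0<..1} - A. inv h t = t"
  proof
    fix t assume t: "t \<in> {0<..1} - A"
    then have "h t = t" using h by (simp add: HA_def)
    then show "inv h t = t" using G_dyad_props(1)[OF hg] by (metis inv_f_f)
  qed
  then show "inv h \<in> HA A" using G_dyad_props(4)[OF hg] by (simp add: HA_def)
qed

definition DI :: "nat \<Rightarrow> int \<Rightarrow> real set" where
  "DI n k = {of_int k / 2 ^ n <.. of_int (k + 1) / 2 ^ n}"

lemma DI_mult: "x \<in> DI n k \<longleftrightarrow> of_int k < x * 2 ^ n \<and> x * 2 ^ n \<le> of_int k + 1"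
  by (simp add: DI_def field_simps)

lemma DI_ceil: "x \<in> DI n k \<longleftrightarrow> \<lceil>x * 2 ^ n\<rceil> = k + 1"
  unfolding DI_mult ceiling_eq_iff by simp

lemma DI_borel[measurable]: "DI n k \<in> sets borel"
  unfolding DI_def by simp

lemma DI_disj: "k \<noteq> k' \<Longrightarrow> DI n k \<inter> DI n k' = {}"
  by (auto simp: DI_ceil)

lemma DI_disj': "x \<in> DI n k \<Longrightarrow> x \<in> DI n k' \<Longrightarrow> k = k'"
  by (auto simp: DI_ceil)

lemma dyad_int_DI: "dyad_int n j = DI n (int j - 1)"
  by (auto simp: dyad_int_def DI_def)

lemma emeasure_DI: "emeasure lborel (DI n k) = ennreal (1 / 2 ^ n)"
  unfolding DI_def by (simp add: field_simps)

lemma measure_DI: "measure lborel (DI n k) = 1 / 2 ^ n"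
  unfolding measure_def emeasure_DI by simp

lemma DI_sub01: "0 \<le> k \<Longrightarrow> k < 2 ^ n \<Longrightarrow> DI n k \<subseteq> {0<..1}"
proof
  fix x assume k: "0 \<le> k" "k < 2 ^ n" and x: "x \<in> DI n k"
  have "k + 1 \<le> 2 ^ n" using k by simp
  then have "real_of_int (k + 1) \<le> real_of_int (2 ^ n)" by (simp only: of_int_le_iff)
  then have "of_int k + 1 \<le> (2::real) ^ n" by simp
  moreover have "0 \<le> (of_int k :: real)" using k by simp
  moreover have "of_int k < x * 2 ^ n" "x * 2 ^ n \<le> of_int k + 1" using x unfolding DI_mult by auto
  ultimately have "0 < x * 2 ^ n" "x * 2 ^ n \<le> 1 * 2 ^ n" by linarith+
  then have "0 < x" "x \<le> 1" by (simp_all add: zero_less_mult_iff)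
  then show "x \<in> {0<..1}" by simp
qed

lemma DI_split: "DI N a = (\<Union>i\<in>{..<(2::nat)^e}. DI (N + e) (a * 2 ^ e + int i))"
proof (intro set_eqI iffI)
  fix x assume x: "x \<in> DI N a"
  define y where "y = x * 2 ^ (N + e)"
  have y: "y = x * 2 ^ N * 2 ^ e" by (simp add: y_def power_add)
  have l: "of_int a * 2 ^ e < y" "y \<le> (of_int a + 1) * 2 ^ e" using x unfolding DI_mult y by auto
  define c where "c = \<lceil>y\<rceil>"
  have "real_of_int (a * 2 ^ e) < of_int c" using l(1) unfolding c_def
    by (simp add: less_ceiling_iff) (meson le_of_int_ceiling less_le_trans)
  then have c1: "a * 2 ^ e + 1 \<le> c" by (simp only: of_int_less_iff)
  have "y \<le> real_of_int ((a + 1) * 2 ^ e)" using l(2) by simp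
  then have c2: "c \<le> (a + 1) * 2 ^ e" unfolding c_def by (simp add: ceiling_le_iff)
  define i where "i = nat (c - 1 - a * 2 ^ e)"
  have ii: "int i = c - 1 - a * 2 ^ e" using c1 by (simp add: i_def)
  have c2': "c \<le> a * 2 ^ e + 2 ^ e" using c2 by (simp add: algebra_simps)
  have "int i < 2 ^ e" using c2' ii by linarith
  then have "int i < int (2 ^ e)" by simp
  then have "i < 2 ^ e" by (simp only: of_nat_less_iff)
  moreover have "x \<in> DI (N + e) (a * 2 ^ e + int i)"
    unfolding DI_ceil using ii by (simp add: c_def y_def)
  ultimately show "x \<in> (\<Union>i\<in>{..<(2::nat)^e}. DI (N + e) (a * 2 ^ e + int i))" by blast
next
  fix x assume "x \<in> (\<Union>i\<in>{..<(2::nat)^e}. DI (N + e) (a * 2 ^ e + int i))"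
  then obtain i where i: "i < (2::nat)^e" "x \<in> DI (N + e) (a * 2 ^ e + int i)" by blast
  have y: "x * 2 ^ (N + e) = x * 2 ^ N * 2 ^ e" by (simp add: power_add)
  have "real i + 1 \<le> real (2 ^ e)" using i(1) by (simp only: of_nat_le_iff flip: of_nat_Suc)
  then have ie: "real i + 1 \<le> 2 ^ e" by simp
  have A: "of_int (a * 2 ^ e + int i) < x * 2 ^ N * 2 ^ e" "x * 2 ^ N * 2 ^ e \<le> of_int (a * 2 ^ e + int i) + 1"
    using i(2) unfolding DI_mult y by auto
  have A1: "of_int a * 2 ^ e + real i < (x * 2 ^ N) * 2 ^ e" using A(1) by simp
  have A2: "(x * 2 ^ N) * 2 ^ e \<le> of_int a * 2 ^ e + real i + 1" using A(2) by simp
  have "of_int a * 2 ^ e < (x * 2 ^ N) * 2 ^ e" using A1 by linarith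
  then have B1: "of_int a < x * 2 ^ N" by (rule mult_right_less_imp_less) simp
  have e1: "(of_int a + 1) * 2 ^ e = of_int a * 2 ^ e + (2::real) ^ e" by (simp add: algebra_simps)
  have "(x * 2 ^ N) * 2 ^ e \<le> (of_int a + 1) * 2 ^ e" using A2 ie unfolding e1 by linarith
  then have B2: "x * 2 ^ N \<le> of_int a + 1" by (rule mult_right_le_imp_le) simp
  show "x \<in> DI N a" unfolding DI_mult using B1 B2 by simp
qed

lemma DI_nested:
  assumes "n \<le> n'"
  shows "DI n k \<inter> DI n' k' = {} \<or> DI n' k' \<subseteq> DI n k"
proof (cases "DI n k \<inter> DI n' k' = {}")
  case False
  then obtain x where x: "x \<in> DI n k" "x \<in> DI n' k'" by blast
  obtain e where e: "n' = n + e" using assms le_Suc_ex by blast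
  have sp: "DI n k = (\<Union>i\<in>{..<(2::nat)^e}. DI n' (k * 2 ^ e + int i))"
    unfolding e by (rule DI_split)
  from x(1) obtain i where i: "x \<in> DI n' (k * 2 ^ e + int i)" "i < 2^e"
    unfolding sp by blast
  then have "k' = k * 2 ^ e + int i" using x(2) DI_disj' by metis
  then have "DI n' k' \<subseteq> DI n k" unfolding sp using i(2) by blast
  then show ?thesis by (rule disjI2)
qed (rule disjI1)

definition Gen :: "nat \<Rightarrow> real set set" where
  "Gen N = insert {} {DI n k | n k. N \<le> n}"

lemma Gen_Int_stable: "Int_stable (Gen N)"
proof (rule Int_stableI)
  fix X Y assume X: "X \<in> Gen N" and Y: "Y \<in> Gen N"
  show "X \<inter> Y \<in> Gen N"
  proof (cases "X = {} \<or> Y = {}")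
    case True then show ?thesis unfolding Gen_def by blast
  next
    case False
    then obtain n k n' k' where nk: "X = DI n k" "Y = DI n' k'" "N \<le> n" "N \<le> n'"
      using X Y unfolding Gen_def by blast
    show ?thesis
    proof (cases "n \<le> n'")
      case True
      from DI_nested[OF True, of k k'] have "X \<inter> Y = {} \<or> X \<inter> Y = Y" unfolding nk by blast
      then show ?thesis using Y unfolding Gen_def by blast
    next
      case False
      then have "n' \<le> n" by simp
      from DI_nested[OF this, of k' k] have "X \<inter> Y = {} \<or> X \<inter> Y = X" unfolding nk by blast
      then show ?thesis using X unfolding Gen_def by blast
    qed
  qed
qed

lemma Gen_borel: "Gen N \<subseteq> sets borel"
  unfolding Gen_def using DI_borel by blast

lemma lessThan_Union:
  fixes a :: real
  shows "{..<a} = \<Union>{DI n k | n k. N \<le> n \<and> of_int (k + 1) / 2 ^ n < a}"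
proof (intro set_eqI iffI)
  fix x assume "x \<in> {..<a}"
  then have xa: "0 < a - x" by simp
  obtain n0 where n0: "(1/2::real) ^ n0 < a - x" using real_arch_pow_inv[OF xa, of "1/2"] by auto
  define n where "n = n0 + N"
  have "(1/2::real) ^ n \<le> (1/2) ^ n0" unfolding n_def by (rule power_decreasing) auto
  then have small: "1 / 2 ^ n < a - x" using n0 by (simp add: power_one_over)
  define k where "k = \<lceil>x * 2 ^ n\<rceil> - 1"
  have xk: "x \<in> DI n k" unfolding DI_ceil k_def by simp
  have "of_int (k + 1) < x * 2 ^ n + 1" unfolding k_def by (simp add: ceiling_less_iff) linarith
  then have "of_int (k + 1) / 2 ^ n < (x * 2 ^ n + 1) / 2 ^ n" by (simp add: divide_strict_right_mono)
  also have "\<dots> = x + 1 / 2 ^ n" by (simp add: field_simps)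
  also have "\<dots> < a" using small by simp
  finally have lt: "of_int (k + 1) / 2 ^ n < a" .
  have "N \<le> n" by (simp add: n_def)
  then have "DI n k \<in> {DI n k | n k. N \<le> n \<and> of_int (k + 1) / 2 ^ n < a}" using lt by blast
  then show "x \<in> \<Union>{DI n k | n k. N \<le> n \<and> of_int (k + 1) / 2 ^ n < a}"
    using xk by (rule UnionI)
next
  fix x assume "x \<in> \<Union>{DI n k | n k. N \<le> n \<and> of_int (k + 1) / 2 ^ n < a}"
  then obtain n k where "x \<in> DI n k" "of_int (k + 1) / 2 ^ n < a" by blast
  then show "x \<in> {..<a}" unfolding DI_def by auto
qed

lemma borel_Gen: "sets borel = sigma_sets UNIV (Gen N)"
proof
  interpret S: sigma_algebra UNIV "sigma_sets UNIV (Gen N)"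
    by (rule sigma_algebra_sigma_sets) simp
  have "range lessThan \<subseteq> sigma_sets UNIV (Gen N)"
  proof safe
    fix a :: real
    let ?F = "{DI n k | n k. N \<le> n \<and> of_int (k + 1) / 2 ^ n < a}"
    have "?F \<subseteq> (\<lambda>p. DI (fst p) (snd p)) ` UNIV"
    proof
      fix X assume "X \<in> ?F"
      then obtain n k where "X = DI n k" by blast
      then show "X \<in> (\<lambda>p. DI (fst p) (snd p)) ` UNIV" using rangeI[of "\<lambda>p. DI (fst p) (snd p)" "(n, k)"] by simp
    qed
    then have "countable ?F" by (rule countable_subset) simp
    moreover have "?F \<subseteq> sigma_sets UNIV (Gen N)"
    proof
      fix X assume "X \<in> ?F"
      then have "X \<in> Gen N" unfolding Gen_def by blast
      then show "X \<in> sigma_sets UNIV (Gen N)" by (rule sigma_sets.Basic)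
    qed
    ultimately have "\<Union>?F \<in> sigma_sets UNIV (Gen N)" by (rule S.countable_Union)
    then show "{..<a} \<in> sigma_sets UNIV (Gen N)" using lessThan_Union[of a N] by simp
  qed
  then have "sigma_sets UNIV (range lessThan) \<subseteq> sigma_sets UNIV (Gen N)"
    by (rule S.sigma_sets_subset)
  then show "sets borel \<subseteq> sigma_sets UNIV (Gen N)"
    by (simp add: borel_Iio)
  show "sigma_sets UNIV (Gen N) \<subseteq> sets borel"
    by (metis Gen_borel sets.sigma_sets_subset space_borel)
qed

lemma trans_measure:
  fixes \<delta> :: real
  assumes S: "S \<in> sets borel"
  shows "measure lborel {t. \<delta> + t \<in> S} = measure lborel S"
proof -
  have m: "(+) \<delta> \<in> measurable lborel borel" by simp
  have "measure lborel S = measure (distr lborel borel ((+) \<delta>)) S"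
    by (simp add: lborel_distr_plus)
  also have "\<dots> = measure lborel ((+) \<delta> -` S \<inter> space lborel)"
    by (rule measure_distr[OF m S])
  also have "(+) \<delta> -` S \<inter> space lborel = {t. \<delta> + t \<in> S}" by auto
  finally show ?thesis by simp
qed

lemma fin01:
  assumes "S \<in> sets borel" "S \<subseteq> {0<..1::real}"
  shows "emeasure lborel S \<noteq> \<infinity>"
proof -
  have "emeasure lborel S \<le> emeasure lborel {0<..1::real}"
    using assms by (intro emeasure_mono) auto
  also have "\<dots> = 1" by simp
  finally have "emeasure lborel S \<le> 1" .
  then have "emeasure lborel S \<noteq> top" by (rule neq_top_trans[OF ennreal_one_neq_top])
  then show ?thesis by simp
qed

lemma rng:
  assumes "0 \<le> a" "a < 2 ^ N" "i < (2::nat) ^ e"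
  shows "0 \<le> a * 2 ^ e + int i" "a * 2 ^ e + int i < 2 ^ (N + e)"
proof -
  show "0 \<le> a * 2 ^ e + int i" using assms by simp
  have "int i < 2 ^ e" using assms(3) by simp
  then have "a * 2 ^ e + int i < (a + 1) * 2 ^ e" by (simp add: algebra_simps)
  also have "\<dots> \<le> 2 ^ N * 2 ^ e" using assms(2) by (intro mult_right_mono) auto
  finally show "a * 2 ^ e + int i < 2 ^ (N + e)" by (simp add: power_add)
qed

lemma DI_shift:
  fixes j j' :: int
  shows "(of_int (j' - j) / 2 ^ n + t \<in> DI n j') = (t \<in> DI n j)"
proof -
  have e: "(of_int (j' - j) / 2 ^ n + t) * 2 ^ n = t * 2 ^ n + of_int j' - of_int j"
    by (simp add: field_simps)
  show ?thesis unfolding DI_mult e by auto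
qed

lemma swap_eq:
  fixes A B :: "real set" and j j' :: int
  assumes j: "0 \<le> j" "j < 2 ^ n" and j': "0 \<le> j'" "j' < 2 ^ n"
    and sub: "DI n j \<subseteq> A" "DI n j' \<subseteq> A"
    and B: "B \<in> sets borel"
    and inv: "\<forall>h\<in>HA A. {t\<in>{0<..1}. h t \<in> B} = B"
  shows "measure lborel (B \<inter> DI n j) = measure lborel (B \<inter> DI n j')"
proof -
  define p where "p = nat j + 1"
  define q where "q = nat j' + 1"
  have ip: "int p = j + 1" "int q = j' + 1" using j j' by (simp_all add: p_def q_def)
  have pr: "p \<in> {1..2^n}" "q \<in> {1..2^n}"
  proof -
    have "int p \<le> 2 ^ n" "int q \<le> 2 ^ n" using ip j j' by simp_all
    then have "int p \<le> int (2 ^ n)" "int q \<le> int (2 ^ n)" by simp_all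
    then have "p \<le> 2 ^ n" "q \<le> 2 ^ n" by (simp_all only: of_nat_le_iff)
    then show "p \<in> {1..2^n}" "q \<in> {1..2^n}" by (simp_all add: p_def q_def)
  qed
  define \<pi> where "\<pi> = Transposition.transpose p q"
  have perm: "\<pi> permutes {1..2^n}" unfolding \<pi>_def using pr by (rule permutes_swap_id)
  define h where "h = dyad_map n \<pi>"
  have dp: "dyad_int n p = DI n j" "dyad_int n q = DI n j'" using ip by (simp_all add: dyad_int_DI)
  have hH: "h \<in> HA A"
    unfolding HA_def
  proof (intro CollectI conjI ballI)
    show "h \<in> G_dyad" unfolding G_dyad_def h_def using perm by blast
    fix t assume t: "t \<in> {0<..1} - A"
    then have t01: "t \<in> {0<..1}" by simp
    define k where "k = idx n t"
    have tk: "t \<in> dyad_int n k" using idx_props[OF t01] by (simp add: k_def)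
    have "k \<noteq> p" using tk t sub dp by auto
    moreover have "k \<noteq> q" using tk t sub dp by auto
    ultimately have "\<pi> k = k" by (simp add: \<pi>_def)
    then show "h t = t" unfolding h_def dyad_map_eq[OF t01] k_def[symmetric] by simp
  qed
  have Binv: "{t\<in>{0<..1}. h t \<in> B} = B" using inv hH by blast
  define \<delta> where "\<delta> = (of_int (j' - j) / 2 ^ n :: real)"
  have hsh: "h t = \<delta> + t" if t: "t \<in> DI n j" for t
  proof -
    have t01: "t \<in> {0<..1}" using DI_sub01[OF j] t by blast
    have "t \<in> dyad_int n p" using t dp by simp
    then have "idx n t = p" using idx_unique[of p t n] pr by simp
    then have "h t = t + (real q - real p) / 2 ^ n"
      unfolding h_def dyad_map_eq[OF t01] by (simp add: \<pi>_def)
    moreover have "real q - real p = of_int (j' - j)"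
    proof -
      have "real q - real p = of_int (int q) - of_int (int p)" by simp
      also have "\<dots> = of_int (j' - j)" unfolding ip by simp
      finally show ?thesis .
    qed
    ultimately show ?thesis by (simp add: \<delta>_def)
  qed
  have "B \<inter> DI n j = {t. \<delta> + t \<in> B \<inter> DI n j'}"
  proof (intro set_eqI iffI)
    fix t assume t: "t \<in> B \<inter> DI n j"
    then have "h t \<in> B" using Binv by blast
    then have "\<delta> + t \<in> B" using hsh t by simp
    moreover have "\<delta> + t \<in> DI n j'" using t DI_shift[of j' j n t] by (simp add: \<delta>_def)
    ultimately show "t \<in> {t. \<delta> + t \<in> B \<inter> DI n j'}" by simp
  next
    fix t assume t: "t \<in> {t. \<delta> + t \<in> B \<inter> DI n j'}"
    then have tj: "t \<in> DI n j" using DI_shift[of j' j n t] by (simp add: \<delta>_def)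
    have t01: "t \<in> {0<..1}" using DI_sub01[OF j] tj by blast
    have "h t \<in> B" using hsh[OF tj] t by simp
    then have "t \<in> B" using Binv t01 by blast
    then show "t \<in> B \<inter> DI n j" using tj by simp
  qed
  then show ?thesis using trans_measure[of "B \<inter> DI n j'" \<delta>] B by simp
qed

lemma em_dens1:
  assumes [measurable]: "B \<in> sets borel" "X \<in> sets borel"
  shows "emeasure (density lborel (indicator B)) X = emeasure lborel (B \<inter> X)"
proof -
  have "emeasure (density lborel (indicator B)) X = (\<integral>\<^sup>+ x. indicator B x * indicator X x \<partial>lborel)"
    by (rule emeasure_density) simp_all
  also have "\<dots> = (\<integral>\<^sup>+ x. indicator (B \<inter> X) x \<partial>lborel)"
    by (simp add: indicator_inter_arith)
  also have "\<dots> = emeasure lborel (B \<inter> X)" by simp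
  finally show ?thesis .
qed

lemma em_dens2:
  assumes [measurable]: "A \<in> sets borel" "X \<in> sets borel"
  shows "emeasure (density lborel (\<lambda>x. c * indicator A x)) X = c * emeasure lborel (A \<inter> X)"
proof -
  have "emeasure (density lborel (\<lambda>x. c * indicator A x)) X = (\<integral>\<^sup>+ x. c * indicator A x * indicator X x \<partial>lborel)"
    by (rule emeasure_density) simp_all
  also have "\<dots> = (\<integral>\<^sup>+ x. c * indicator (A \<inter> X) x \<partial>lborel)"
    by (simp add: indicator_inter_arith mult.assoc)
  also have "\<dots> = c * emeasure lborel (A \<inter> X)" by (rule nn_integral_cmult_indicator) simp
  finally show ?thesis .
qed

lemma sum_split:
  fixes B :: "real set"
  assumes a: "0 \<le> a" "a < 2 ^ N" and B: "B \<in> sets borel"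
    and eq: "\<And>i. i < (2::nat) ^ e \<Longrightarrow> measure lborel (B \<inter> DI (N + e) (a * 2 ^ e + int i)) = \<beta>"
  shows "measure lborel (B \<inter> DI N a) = 2 ^ e * \<beta>"
proof -
  have "B \<inter> DI N a = (\<Union>i\<in>{..<(2::nat)^e}. B \<inter> DI (N + e) (a * 2 ^ e + int i))"
    unfolding DI_split[of N a e] by blast
  also have "measure lborel \<dots> = (\<Sum>i\<in>{..<(2::nat)^e}. measure lborel (B \<inter> DI (N + e) (a * 2 ^ e + int i)))"
  proof (rule measure_finite_Union)
    show "disjoint_family_on (\<lambda>i. B \<inter> DI (N + e) (a * 2 ^ e + int i)) {..<2 ^ e}"
      unfolding disjoint_family_on_def
    proof (intro ballI impI)
      fix i i' :: nat assume "i \<noteq> i'"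
      then have "a * 2 ^ e + int i \<noteq> a * 2 ^ e + int i'" by simp
      then show "B \<inter> DI (N + e) (a * 2 ^ e + int i) \<inter> (B \<inter> DI (N + e) (a * 2 ^ e + int i')) = {}"
        using DI_disj by blast
    qed
    fix i assume i: "i \<in> {..<(2::nat)^e}"
    have "DI (N + e) (a * 2 ^ e + int i) \<subseteq> {0<..1}" using rng[OF a, of i e] i by (intro DI_sub01) auto
    then show "emeasure lborel (B \<inter> DI (N + e) (a * 2 ^ e + int i)) \<noteq> \<infinity>"
      using B by (intro fin01) auto
  qed (use B in auto)
  also have "\<dots> = (\<Sum>i\<in>{..<(2::nat)^e}. \<beta>)" using eq by simp
  also have "\<dots> = 2 ^ e * \<beta>" by simp
  finally show ?thesis .
qed

lemma core:
  fixes a b :: int and B :: "real set"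
  assumes ab: "0 \<le> a" "a < 2 ^ N" "0 \<le> b" "b < 2 ^ N" "a \<noteq> b"
    and B: "B \<in> sets borel" "B \<subseteq> DI N a \<union> DI N b"
    and inv: "\<forall>h\<in>HA (DI N a \<union> DI N b). {t\<in>{0<..1}. h t \<in> B} = B"
  shows "measure lborel B = 0 \<or> measure lborel B = measure lborel (DI N a \<union> DI N b)"
proof -
  define A where "A = DI N a \<union> DI N b"
  note B' = B[folded A_def]
  note inv' = inv[folded A_def]
  have A01: "A \<subseteq> {0<..1}" unfolding A_def using DI_sub01 ab by blast
  have Aborel[measurable]: "A \<in> sets borel" unfolding A_def by simp
  have Bborel[measurable]: "B \<in> sets borel" using B by simp
  have mA: "measure lborel A = 2 / 2 ^ N"
  proof -
    have "measure lborel A = measure lborel (DI N a) + measure lborel (DI N b)"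
      unfolding A_def by (rule measure_Union) (auto simp: emeasure_DI DI_disj ab)
    then show ?thesis by (simp add: measure_DI)
  qed
  define J where "J e = (\<lambda>i. a * 2 ^ e + int i) ` {..<(2::nat) ^ e} \<union> (\<lambda>i. b * 2 ^ e + int i) ` {..<(2::nat) ^ e}" for e
  have Jrng: "0 \<le> j \<and> j < 2 ^ (N + e)" if "j \<in> J e" for j e
  proof -
    from that obtain i where i: "i < 2 ^ e" "j = a * 2 ^ e + int i \<or> j = b * 2 ^ e + int i"
      unfolding J_def by blast
    show ?thesis using i(2) rng[OF ab(1,2) i(1)] rng[OF ab(3,4) i(1)] by blast
  qed
  have AJ: "A = (\<Union>j\<in>J e. DI (N + e) j)" for e
    unfolding A_def J_def DI_split[of N a e] DI_split[of N b e] UN_Un by simp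
  have Jsub: "DI (N + e) j \<subseteq> A" if "j \<in> J e" for j e
    using AJ[of e] that by blast
  define \<beta> where "\<beta> e = measure lborel (B \<inter> DI (N + e) (a * 2 ^ e))" for e
  have a0: "a * 2 ^ e \<in> J e" for e unfolding J_def by (rule UnI1, rule image_eqI[where x=0]) simp_all
  have Jeq: "measure lborel (B \<inter> DI (N + e) j) = \<beta> e" if "j \<in> J e" for j e
    unfolding \<beta>_def
    by (rule swap_eq[OF _ _ _ _ Jsub Jsub Bborel inv'])
       (use Jrng[OF that] Jrng[OF a0[of e]] that a0[of e] in auto)
  have mB: "measure lborel B = 2 * 2 ^ e * \<beta> e" for e
  proof -
    have sa: "measure lborel (B \<inter> DI N a) = 2 ^ e * \<beta> e"
      by (rule sum_split[OF ab(1,2) Bborel]) (rule Jeq, auto simp: J_def)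
    have sb: "measure lborel (B \<inter> DI N b) = 2 ^ e * \<beta> e"
      by (rule sum_split[OF ab(3,4) Bborel]) (rule Jeq, auto simp: J_def)
    have "B = (B \<inter> DI N a) \<union> (B \<inter> DI N b)" using B by blast
    moreover have d: "(B \<inter> DI N a) \<inter> (B \<inter> DI N b) = {}" using DI_disj[OF ab(5), of N] by blast
    moreover have f1: "emeasure lborel (B \<inter> DI N a) \<noteq> \<infinity>"
      by (rule fin01) (use DI_sub01[OF ab(1,2)] in auto)
    moreover have f2: "emeasure lborel (B \<inter> DI N b) \<noteq> \<infinity>"
      by (rule fin01) (use DI_sub01[OF ab(3,4)] in auto)
    ultimately have "measure lborel B = measure lborel (B \<inter> DI N a) + measure lborel (B \<inter> DI N b)"
      using measure_Union[OF f1 f2 _ _ d] by simp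
    then show ?thesis using sa sb by simp
  qed
  define c where "c = measure lborel B / measure lborel A"
  have c0: "0 \<le> c" unfolding c_def by simp
  have key: "emeasure lborel (B \<inter> X) = ennreal c * emeasure lborel (A \<inter> X)" if X: "X \<in> Gen N" for X
  proof (cases "X = {}")
    case True then show ?thesis by simp
  next
    case False
    then obtain n k where nk: "X = DI n k" "N \<le> n" using X unfolding Gen_def by blast
    define e where "e = n - N"
    have n: "n = N + e" using nk by (simp add: e_def)
    show ?thesis
    proof (cases "k \<in> J e")
      case True
      have XA: "X \<subseteq> A" using Jsub[OF True] nk n by simp
      have "emeasure lborel (B \<inter> X) = ennreal (\<beta> e)"
      proof -
        have "emeasure lborel (B \<inter> X) = ennreal (measure lborel (B \<inter> X))"
          using fin01[of "B \<inter> X"] XA A01 nk by (intro emeasure_eq_ennreal_measure) auto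
        then show ?thesis using Jeq[OF True] nk n by simp
      qed
      moreover have "ennreal c * emeasure lborel (A \<inter> X) = ennreal (c / 2 ^ n)"
      proof -
        have "A \<inter> X = X" using XA by blast
        then have "ennreal c * emeasure lborel (A \<inter> X) = ennreal c * ennreal (1 / 2 ^ n)"
          using nk by (simp add: emeasure_DI)
        also have "\<dots> = ennreal (c * (1 / 2 ^ n))" using ennreal_mult[OF c0, of "1 / 2 ^ n"] by simp
        finally show ?thesis by simp
      qed
      moreover have "c / 2 ^ n = \<beta> e"
      proof -
        have "c = (2 * 2 ^ e * \<beta> e) / (2 / 2 ^ N)" unfolding c_def mB[of e] mA ..
        also have "\<dots> = 2 ^ N * 2 ^ e * \<beta> e" by (simp add: field_simps)
        finally show ?thesis unfolding n by (simp add: power_add)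
      qed
      ultimately show ?thesis by simp
    next
      case False
      have "A \<inter> X = {}"
      proof (rule ccontr)
        assume "A \<inter> X \<noteq> {}"
        then obtain x where x: "x \<in> A" "x \<in> X" by blast
        then obtain j where j: "j \<in> J e" "x \<in> DI (N + e) j" using AJ[of e] by blast
        have "k = j" using DI_disj'[OF _ j(2)] x(2) nk n by simp
        then show False using False j(1) by simp
      qed
      moreover have "B \<inter> X = {}" using calculation B' by blast
      ultimately show ?thesis by simp
    qed
  qed
  define M1 where "M1 = density lborel (indicator B)"
  define M2 where "M2 = density lborel (\<lambda>x. ennreal c * indicator A x)"
  have sM1: "sets M1 = sigma_sets UNIV (Gen N)" unfolding M1_def using borel_Gen by simp
  have sM2: "sets M2 = sigma_sets UNIV (Gen N)" unfolding M2_def using borel_Gen by simp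
  have "M1 = M2"
  proof (rule measure_eqI_generator_eq_countable[OF Gen_Int_stable _ _ sM1 sM2])
    show "Gen N \<subseteq> Pow UNIV" by simp
    fix X assume X: "X \<in> Gen N"
    then have Xb: "X \<in> sets borel" using Gen_borel by blast
    show "emeasure M1 X = emeasure M2 X"
      unfolding M1_def M2_def em_dens1[OF Bborel Xb] em_dens2[OF Aborel Xb] using key[OF X] .
  next
    show "range (DI N) \<subseteq> Gen N" unfolding Gen_def by blast
    show "\<Union>(range (DI N)) = UNIV"
    proof safe
      fix x :: real
      have "x \<in> DI N (\<lceil>x * 2 ^ N\<rceil> - 1)" unfolding DI_ceil by simp
      then show "x \<in> \<Union>(range (DI N))" by blast
    qed simp
    show "countable (range (DI N))" by simp
    fix X assume "X \<in> range (DI N)"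
    then obtain k where k: "X = DI N k" by blast
    have "emeasure M1 X = emeasure lborel (B \<inter> X)" unfolding M1_def k by (rule em_dens1) simp_all
    also have "\<dots> \<noteq> \<infinity>" by (rule fin01) (use B' A01 k in auto)
    finally show "emeasure M1 X \<noteq> \<infinity>" .
  qed
  then have "emeasure M1 B = emeasure M2 B" by simp
  then have "emeasure lborel B = ennreal c * emeasure lborel B"
    unfolding M1_def M2_def em_dens1[OF Bborel Bborel] em_dens2[OF Aborel Bborel]
    using B' by (simp add: Int_absorb1)
  moreover have "emeasure lborel B = ennreal (measure lborel B)"
    using fin01[OF Bborel] B' A01 by (intro emeasure_eq_ennreal_measure) auto
  ultimately have "ennreal (measure lborel B) = ennreal (c * measure lborel B)"
    using c0 by (simp add: ennreal_mult)
  then have "measure lborel B = c * measure lborel B" using c0 by (simp add: ennreal_inj)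
  moreover have "measure lborel A > 0" using mA by simp
  ultimately have "measure lborel B = 0 \<or> measure lborel B = measure lborel A"
  proof (cases "measure lborel B = 0")
    case False
    assume eq: "measure lborel B = c * measure lborel B" and pos: "measure lborel A > 0"
    have "1 * measure lborel B = c * measure lborel B" using eq by simp
    then have "c = 1" using False by (simp only: mult_cancel_right) simp
    then have "measure lborel B / measure lborel A = 1" by (simp add: c_def)
    then show ?thesis by (simp add: divide_eq_1_iff)
  qed simp
  then show ?thesis unfolding A_def .
qed

lemma idx_rng:
  assumes "1 \<le> k" "k \<le> (2::nat) ^ d"
  shows "0 \<le> int k - 1" "int k - 1 < 2 ^ d"
proof -
  show "0 \<le> int k - 1" using assms by simp
  have "int k \<le> int (2 ^ d)" using assms(2) by (simp only: of_nat_le_iff)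
  then have "int k \<le> 2 ^ d" by (simp only: of_nat_power of_nat_numeral)
  then show "int k - 1 < 2 ^ d" by linarith
qed

lemma dyad_sub01: "1 \<le> k \<Longrightarrow> k \<le> 2 ^ d \<Longrightarrow> dyad_int d k \<subseteq> {0<..1}"
  unfolding dyad_int_DI using DI_sub01 idx_rng by blast

lemma sa_F: "sigma_algebra {0<..1} (F_dyad NE)"
  unfolding F_dyad_def by (rule sigma_algebra_sigma_sets) (use dyad_sub01 in blast)

lemma dyad_in_F:
  assumes "d \<le> NE" "1 \<le> k" "k \<le> (2::nat) ^ d"
  shows "dyad_int d k \<in> F_dyad NE"
proof -
  interpret S: sigma_algebra "{0<..1::real}" "F_dyad NE" by (rule sa_F)
  define e where "e = NE - d"
  have NE: "NE = d + e" using assms(1) by (simp add: e_def)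
  note r = idx_rng[OF assms(2,3)]
  have eq: "dyad_int d k = (\<Union>i\<in>{..<(2::nat)^e}. DI NE ((int k - 1) * 2 ^ e + int i))"
    unfolding dyad_int_DI NE by (rule DI_split)
  have "DI NE ((int k - 1) * 2 ^ e + int i) \<in> F_dyad NE" if i: "i < 2 ^ e" for i
  proof -
    define j where "j = (int k - 1) * 2 ^ e + int i"
    have j: "0 \<le> j" "j < 2 ^ NE" using rng[OF r i] unfolding j_def NE by auto
    define l where "l = nat j + 1"
    have l: "1 \<le> l" "l \<le> 2 ^ NE"
    proof -
      show "1 \<le> l" by (simp add: l_def)
      have "int l \<le> 2 ^ NE" using j by (simp add: l_def)
      then have "int l \<le> int (2 ^ NE)" by simp
      then show "l \<le> 2 ^ NE" by (simp only: of_nat_le_iff)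
    qed
    have "DI NE j = dyad_int NE l" using j by (simp add: dyad_int_DI l_def)
    then have "DI NE j \<in> {dyad_int NE l | l. 1 \<le> l \<and> l \<le> 2 ^ NE}" using l by blast
    then show ?thesis unfolding F_dyad_def j_def[symmetric] by (rule sigma_sets.Basic)
  qed
  then show ?thesis unfolding eq by (intro S.finite_UN) auto
qed

lemma fle:
  fixes E :: "real set" and f :: "nat \<Rightarrow> nat \<times> nat"
  assumes f: "\<And>i. 1 \<le> snd (f i) \<and> snd (f i) \<le> 2 ^ fst (f i) \<and> dyad_int (fst (f i)) (snd (f i)) \<subseteq> E"
  shows "finite_locally_ergodic (G_dyad_on E) (\<Union>i\<le>n. dyad_int (fst (f i)) (snd (f i)))"
proof -
  let ?En = "\<Union>i\<le>n. dyad_int (fst (f i)) (snd (f i))"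
  have Eb: "?En \<in> sets borel" by (intro sets.finite_UN) (auto simp: dyad_int_DI)
  have E01: "?En \<subseteq> {0<..1}" using f dyad_sub01 by blast
  have EE: "?En \<subseteq> E" using f by blast
  have pos: "measure lborel ?En > 0"
  proof -
    have sub: "dyad_int (fst (f 0)) (snd (f 0)) \<subseteq> ?En" by blast
    have "?En \<in> fmeasurable lborel" using fin01[OF Eb E01] Eb by (auto simp: fmeasurable_def less_top)
    then have "measure lborel (dyad_int (fst (f 0)) (snd (f 0))) \<le> measure lborel ?En"
      by (intro measure_mono_fmeasurable[OF sub]) (auto simp: dyad_int_DI)
    moreover have "measure lborel (dyad_int (fst (f 0)) (snd (f 0))) > 0"
      by (simp add: dyad_int_DI measure_DI)
    ultimately show ?thesis by linarith
  qed
  define NE where "NE = (MAX i\<in>{..n}. fst (f i))"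
  have inF: "?En \<in> F_dyad NE"
  proof -
    interpret S: sigma_algebra "{0<..1::real}" "F_dyad NE" by (rule sa_F)
    show ?thesis
    proof (intro S.finite_UN)
      fix i assume "i \<in> {..n}"
      then have "fst (f i) \<le> NE" unfolding NE_def by (intro Max_ge) auto
      then show "dyad_int (fst (f i)) (snd (f i)) \<in> F_dyad NE" using f[of i] by (intro dyad_in_F) auto
    qed simp
  qed
  have erg: "let A = dyad_int N l \<union> dyad_int N m in
             \<exists>H. is_subgroup_of H (G_dyad_on E) \<and> (\<forall>h\<in>H. \<forall>t\<in>{0<..1} - A. h t = t) \<and>
                 (\<forall>B \<in> sets borel. B \<subseteq> A \<longrightarrow>
                    (\<forall>h\<in>H. {t \<in> {0<..1}. h t \<in> B} = B) \<longrightarrow>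
                    measure lborel B = 0 \<or> measure lborel B = measure lborel A)"
    if lm: "1 \<le> l" "l \<le> 2 ^ N" "1 \<le> m" "m \<le> 2 ^ N" "l \<noteq> m"
      and AE: "dyad_int N l \<union> dyad_int N m \<subseteq> ?En" for N l m
  proof -
    define A where "A = dyad_int N l \<union> dyad_int N m"
    have AE': "A \<subseteq> E" using AE EE unfolding A_def by blast
    define a where "a = int l - 1"
    define b where "b = int m - 1"
    have ra: "0 \<le> a" "a < 2 ^ N" using idx_rng[OF lm(1,2)] by (simp_all add: a_def)
    have rb: "0 \<le> b" "b < 2 ^ N" using idx_rng[OF lm(3,4)] by (simp_all add: b_def)
    have ab: "a \<noteq> b" using lm(5) by (simp add: a_def b_def)
    have AD: "A = DI N a \<union> DI N b" by (simp add: A_def a_def b_def dyad_int_DI)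
    have "is_subgroup_of (HA A) (G_dyad_on E) \<and> (\<forall>h\<in>HA A. \<forall>t\<in>{0<..1} - A. h t = t) \<and>
                 (\<forall>B \<in> sets borel. B \<subseteq> A \<longrightarrow>
                    (\<forall>h\<in>HA A. {t \<in> {0<..1}. h t \<in> B} = B) \<longrightarrow>
                    measure lborel B = 0 \<or> measure lborel B = measure lborel A)"
    proof (intro conjI ballI impI)
      show "is_subgroup_of (HA A) (G_dyad_on E)" by (rule HA_subgroup[OF AE'])
      show "h t = t" if "h \<in> HA A" "t \<in> {0<..1} - A" for h t using that by (simp add: HA_def)
      fix B :: "real set" assume B: "B \<in> sets borel" "B \<subseteq> A" "\<forall>h\<in>HA A. {t \<in> {0<..1}. h t \<in> B} = B"
      show "measure lborel B = 0 \<or> measure lborel B = measure lborel A"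
        using core[OF ra rb ab B(1)] B(2,3) unfolding AD by blast
    qed
    then show ?thesis unfolding Let_def A_def by blast
  qed
  show ?thesis unfolding finite_locally_ergodic_def
    using Eb pos inF erg by blast
qed

theorem lemma5p1:
  assumes "E \<in> dyad_open_sets" and "E \<noteq> {}"
  shows "locally_ergodic (G_dyad_on E) E"
proof -
  obtain S where S: "E = \<Union>S" "S \<subseteq> {dyad_int d k | d k. 1 \<le> k \<and> k \<le> 2 ^ d}"
    using assms(1) unfolding dyad_open_sets_def by blast
  define P where "P = {p :: nat \<times> nat. 1 \<le> snd p \<and> snd p \<le> 2 ^ fst p \<and> dyad_int (fst p) (snd p) \<subseteq> E}"
  have EP: "x \<in> E \<longleftrightarrow> (\<exists>p\<in>P. x \<in> dyad_int (fst p) (snd p))" for x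
  proof
    assume "x \<in> E"
    then obtain I where I: "I \<in> S" "x \<in> I" using S(1) by blast
    then obtain d k where dk: "I = dyad_int d k" "1 \<le> k" "k \<le> 2 ^ d" using S(2) by blast
    have "I \<subseteq> E" using I S(1) by blast
    then have dkP: "(d, k) \<in> P" using dk by (simp add: P_def)
    show "\<exists>p\<in>P. x \<in> dyad_int (fst p) (snd p)" using I(2) dk(1) dkP by (intro bexI[of _ "(d, k)"]) simp_all
  next
    assume "\<exists>p\<in>P. x \<in> dyad_int (fst p) (snd p)"
    then show "x \<in> E" unfolding P_def by blast
  qed
  have Pne: "P \<noteq> {}" using assms(2) EP by blast
  have Pc: "countable P" by (rule countable_subset[of _ UNIV]) simp_all
  define f where "f = from_nat_into P"
  have rf: "range f = P" unfolding f_def using Pne Pc by (rule range_from_nat_into)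
  have fP: "f i \<in> P" for i using rf by blast
  have fprop: "1 \<le> snd (f i) \<and> snd (f i) \<le> 2 ^ fst (f i) \<and> dyad_int (fst (f i)) (snd (f i)) \<subseteq> E" for i
    using fP[of i] by (simp add: P_def)
  define En where "En n = (\<Union>i\<le>n. dyad_int (fst (f i)) (snd (f i)))" for n
  have inc: "incseq En" unfolding incseq_def En_def
  proof (intro allI impI subsetI)
    fix m n :: nat and x assume mn: "m \<le> n" and x: "x \<in> (\<Union>i\<le>m. dyad_int (fst (f i)) (snd (f i)))"
    then obtain i where "i \<le> m" "x \<in> dyad_int (fst (f i)) (snd (f i))" by blast
    moreover have "i \<le> n" using calculation(1) mn by simp
    ultimately show "x \<in> (\<Union>i\<le>n. dyad_int (fst (f i)) (snd (f i)))" by blast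
  qed
  have fl: "finite_locally_ergodic (G_dyad_on E) (En n)" for n
    unfolding En_def by (rule fle[OF fprop])
  have un: "E = (\<Union>n. En n)"
  proof (intro set_eqI iffI)
    fix x assume "x \<in> E"
    then obtain p where p: "p \<in> P" "x \<in> dyad_int (fst p) (snd p)" using EP by blast
    then obtain i where "p = f i" using rf by blast
    then show "x \<in> (\<Union>n. En n)" using p unfolding En_def by blast
  next
    fix x assume "x \<in> (\<Union>n. En n)"
    then show "x \<in> E" using fprop unfolding En_def by blast
  qed
  show ?thesis unfolding locally_ergodic_def using inc fl un by blast
qed

end
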